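(* Let $N\ge1$, $\alpha>0$, $a_k,w_k\in\mathbb{C}$ with $a_k\neq0$ for $k=1,\dots,N$ and $\Re w_k\neq\Re w_l$ for $k\neq l$. For $k=1,\dots,N$, $s=0,\dots,N-1$ let $$A_{k,s}=(-1)^s\sum_{\substack{j_1<\dots<j_s\\ j_l\neq k}} e^{\frac{2\pi}{\alpha}(w_{j_1}+\dots+w_{j_s})},\qquad m_s(\xi)=\sum_{k=1}^N a_kA_{k,s}e^{2\pi\xi w_k}.$$ For $\theta\in\mathbb{R}$ let $B(\theta,N)$ be the $N\times N$ matrix with entries $B_{r,s}=m_{s}(\theta-r)$, $r=0,\dots,N-1$, $s=0,\dots,N-1$. Then $\det B(\theta,N)\neq0$ for every $\theta\in\mathbb{R}$.
   Context: In the definition of $A_{k,s}$ the sum is over all $s$-element subsets $\{j_1,\dots,j_s\}$ of $\{1,\dots,N\}\setminus\{k\}$, with $A_{k,0}=1$. *)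

theory Defs
  imports Complex_Main "Jordan_Normal_Form.Determinant"
begin

definition A_coef :: "nat \<Rightarrow> real \<Rightarrow> (nat \<Rightarrow> complex) \<Rightarrow> nat \<Rightarrow> nat \<Rightarrow> complex" where
  "A_coef N \<alpha> w k s =
     (-1) ^ s * (\<Sum>J\<in>{J. J \<subseteq> {1..N} - {k} \<and> card J = s}.
        exp (complex_of_real (2 * pi / \<alpha>) * (\<Sum>j\<in>J. w j)))"

definition m_fun :: "nat \<Rightarrow> real \<Rightarrow> (nat \<Rightarrow> complex) \<Rightarrow> (nat \<Rightarrow> complex) \<Rightarrow> nat \<Rightarrow> real \<Rightarrow> complex" where
  "m_fun N \<alpha> a w s \<xi> =
     (\<Sum>k=1..N. a k * A_coef N \<alpha> w k s * exp (complex_of_real (2 * pi * \<xi>) * w k))"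

definition B_mat :: "nat \<Rightarrow> real \<Rightarrow> (nat \<Rightarrow> complex) \<Rightarrow> (nat \<Rightarrow> complex) \<Rightarrow> real \<Rightarrow> complex mat" where
  "B_mat N \<alpha> a w \<theta> = mat N N (\<lambda>(r, s). m_fun N \<alpha> a w s (\<theta> - real r))"

end

theory Submission imports Defs begin

lemma poly1:
  fixes u :: "nat \<Rightarrow> complex" and S :: "nat set"
  assumes fin: "finite S" and cS: "card S < N"
  shows "(\<Sum>s<N. (-1)^s * (\<Sum>J\<in>{J. J \<subseteq> S \<and> card J = s}. \<Prod>j\<in>J. u j) * x^s)
         = (\<Prod>j\<in>S. 1 - u j * x)"
proof -
  have "(\<Prod>j\<in>S. 1 - u j * x) = (\<Prod>j\<in>S. (- (u j * x)) + 1)" by simp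
  also have "\<dots> = (\<Sum>X\<in>Pow S. (\<Prod>j\<in>X. - (u j * x)) * (\<Prod>j\<in>S-X. 1))"
    by (rule prod_add[OF fin])
  also have "\<dots> = (\<Sum>X\<in>Pow S. (-1)^card X * (\<Prod>j\<in>X. u j) * x^card X)"
  proof (rule sum.cong[OF refl])
    fix X assume "X \<in> Pow S"
    then have "finite X" using fin finite_subset by auto
    have "(\<Prod>j\<in>X. - (u j * x)) = (\<Prod>j\<in>X. (-x) * u j)" by (simp add: mult.commute)
    also have "\<dots> = (-x)^card X * (\<Prod>j\<in>X. u j)" by (simp only: prod.distrib prod_constant)
    finally show "(\<Prod>j\<in>X. - (u j * x)) * (\<Prod>j\<in>S-X. 1) = (-1)^card X * (\<Prod>j\<in>X. u j) * x^card X"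
      by (simp add: power_minus[of x])
  qed
  also have "\<dots> = (\<Sum>s<N. \<Sum>X\<in>{X\<in>Pow S. card X = s}. (-1)^card X * (\<Prod>j\<in>X. u j) * x^card X)"
  proof (rule sum.group[symmetric])
    show "finite (Pow S)" using fin by simp
    show "finite {..<N}" by simp
    show "card ` Pow S \<subseteq> {..<N}" using cS fin by (auto intro: le_less_trans card_mono)
  qed
  also have "\<dots> = (\<Sum>s<N. (-1)^s * (\<Sum>J\<in>{J. J \<subseteq> S \<and> card J = s}. \<Prod>j\<in>J. u j) * x^s)"
  proof (rule sum.cong[OF refl])
    fix s
    have "(\<Sum>X\<in>{X\<in>Pow S. card X = s}. (-1)^card X * (\<Prod>j\<in>X. u j) * x^card X)
        = (\<Sum>X\<in>{J. J \<subseteq> S \<and> card J = s}. (-1)^s * x^s * (\<Prod>j\<in>X. u j))"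
      by (rule sum.cong) (auto simp: mult_ac)
    also have "\<dots> = (-1)^s * (\<Sum>J\<in>{J. J \<subseteq> S \<and> card J = s}. \<Prod>j\<in>J. u j) * x^s"
      by (simp add: sum_distrib_left mult_ac)
    finally show "(\<Sum>X\<in>{X\<in>Pow S. card X = s}. (-1)^card X * (\<Prod>j\<in>X. u j) * x^card X) = (-1)^s * (\<Sum>J\<in>{J. J \<subseteq> S \<and> card J = s}. \<Prod>j\<in>J. u j) * x^s" .
  qed
  finally show ?thesis ..
qed

lemma poly2:
  fixes z :: "nat \<Rightarrow> complex" and S :: "nat set"
  assumes fin: "finite S" and cS: "card S < N"
  shows "(\<Sum>r<N. (\<Sum>X\<in>{X\<in>Pow S. card (S - X) = r}. \<Prod>j\<in>X. - z j) * x^r)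
         = (\<Prod>j\<in>S. x - z j)"
proof -
  have "(\<Prod>j\<in>S. x - z j) = (\<Prod>j\<in>S. (- z j) + x)" by simp
  also have "\<dots> = (\<Sum>X\<in>Pow S. (\<Prod>j\<in>X. - z j) * (\<Prod>j\<in>S-X. x))"
    by (rule prod_add[OF fin])
  also have "\<dots> = (\<Sum>X\<in>Pow S. (\<Prod>j\<in>X. - z j) * x ^ card (S - X))"
    by simp
  also have "\<dots> = (\<Sum>r<N. \<Sum>X\<in>{X\<in>Pow S. card (S - X) = r}. (\<Prod>j\<in>X. - z j) * x ^ card (S - X))"
  proof (rule sum.group[symmetric])
    show "finite (Pow S)" using fin by simp
    show "finite {..<N}" by simp
    show "(\<lambda>X. card (S - X)) ` Pow S \<subseteq> {..<N}" using cS fin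
      by (auto intro: le_less_trans card_mono)
  qed
  also have "\<dots> = (\<Sum>r<N. (\<Sum>X\<in>{X\<in>Pow S. card (S - X) = r}. \<Prod>j\<in>X. - z j) * x^r)"
    by (rule sum.cong[OF refl]) (simp add: sum_distrib_right)
  finally show ?thesis ..
qed


lemma exp_inj_re:
  fixes c :: real and p q :: complex
  assumes "c \<noteq> 0" "exp (complex_of_real c * p) = exp (complex_of_real c * q)"
  shows "Re p = Re q"
proof -
  have "norm (exp (complex_of_real c * p)) = norm (exp (complex_of_real c * q))" using assms(2) by simp
  then have "exp (c * Re p) = exp (c * Re q)" by simp
  then have "c * Re p = c * Re q" by simp
  then show ?thesis using assms(1) by simp
qed

theorem lemma5p1:
  fixes N :: nat and \<alpha> :: real and a w :: "nat \<Rightarrow> complex"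
  assumes "N \<ge> 1" and "\<alpha> > 0"
    and "\<forall>k\<in>{1..N}. a k \<noteq> 0"
    and "\<forall>k\<in>{1..N}. \<forall>l\<in>{1..N}. k \<noteq> l \<longrightarrow> Re (w k) \<noteq> Re (w l)"
  shows "\<forall>\<theta>::real. det (B_mat N \<alpha> a w \<theta>) \<noteq> 0"
proof
  fix \<theta> :: real
  define S where "S k = {1..N} - {k}" for k :: nat
  define u where "u j = exp (complex_of_real (2 * pi / \<alpha>) * w j)" for j
  define z where "z j = exp (complex_of_real (- 2 * pi) * w j)" for j
  define x where "x i = inverse (u (Suc i))" for i
  define E where "E k = exp (complex_of_real (2 * pi * \<theta>) * w k)" for k
  define P where "P i = (\<Prod>j\<in>S (Suc i). 1 - u j * x i)" for i
  define Q where "Q i = (\<Prod>j\<in>S (Suc i). z (Suc i) - z j)" for i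
  define d where "d i = a (Suc i) * E (Suc i) * P i * Q i" for i
  define B where "B = B_mat N \<alpha> a w \<theta>"
  define Cm where "Cm = mat N N (\<lambda>(s,i). x i ^ s)"
  define Lm where "Lm = mat N N (\<lambda>(i,r). \<Sum>X\<in>{X\<in>Pow (S (Suc i)). card (S (Suc i) - X) = r}. \<Prod>j\<in>X. - z j)"
  have finS: "finite (S k)" for k unfolding S_def by simp
  have cardS: "k \<in> {1..N} \<Longrightarrow> card (S k) < N" for k unfolding S_def using assms(1) by auto
  have un0: "u j \<noteq> 0" for j unfolding u_def by simp
  have uinj: "u j \<noteq> u k" if "j \<in> {1..N}" "k \<in> {1..N}" "j \<noteq> k" for j k
  proof
    assume "u j = u k"
    then have "Re (w j) = Re (w k)" unfolding u_def
      by (intro exp_inj_re[of "2 * pi / \<alpha>"]) (use assms(2) in auto)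
    then show False using assms(4) that by auto
  qed
  have zinj: "z j \<noteq> z k" if "j \<in> {1..N}" "k \<in> {1..N}" "j \<noteq> k" for j k
  proof
    assume "z j = z k"
    then have "Re (w j) = Re (w k)" unfolding z_def
      by (intro exp_inj_re[of "- 2 * pi"]) auto
    then show False using assms(4) that by auto
  qed
  have Aeq: "A_coef N \<alpha> w k s = (-1)^s * (\<Sum>J\<in>{J. J \<subseteq> S k \<and> card J = s}. \<Prod>j\<in>J. u j)" for k s
    unfolding A_coef_def S_def u_def
  proof (intro arg_cong[where f="\<lambda>t. (-1)^s * t"] sum.cong refl)
    fix J assume "J \<in> {J. J \<subseteq> {1..N} - {k} \<and> card J = s}"
    then have "finite J" by (auto intro: finite_subset)
    then show "exp (complex_of_real (2 * pi / \<alpha>) * sum w J) = (\<Prod>j\<in>J. exp (complex_of_real (2 * pi / \<alpha>) * w j))"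
      by (simp add: sum_distrib_left exp_sum)
  qed
  have Eeq: "exp (complex_of_real (2 * pi * (\<theta> - real r)) * w k) = E k * z k ^ r" for k r
  proof -
    have h: "complex_of_real (2 * pi * (\<theta> - real r)) * w k
        = complex_of_real (2 * pi * \<theta>) * w k + of_nat r * (complex_of_real (- 2 * pi) * w k)"
      by (simp add: algebra_simps)
    show ?thesis unfolding E_def z_def h exp_add exp_of_nat_mult ..
  qed
  have BC: "B * Cm = mat N N (\<lambda>(r,i). a (Suc i) * E (Suc i) * z (Suc i) ^ r * P i)"
  proof (rule eq_matI)
    fix r i assume r: "r < dim_row (mat N N (\<lambda>(r,i). a (Suc i) * E (Suc i) * z (Suc i) ^ r * P i))"
      and i: "i < dim_col (mat N N (\<lambda>(r,i). a (Suc i) * E (Suc i) * z (Suc i) ^ r * P i))"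
    then have r: "r < N" and i: "i < N" by auto
    have "(B * Cm) $$ (r,i) = (\<Sum>s<N. m_fun N \<alpha> a w s (\<theta> - real r) * x i ^ s)"
      using r i by (simp add: B_def Cm_def B_mat_def scalar_prod_def lessThan_atLeast0)
    also have "\<dots> = (\<Sum>s<N. \<Sum>k=1..N. a k * E k * z k ^ r * (A_coef N \<alpha> w k s * x i ^ s))"
      unfolding m_fun_def Eeq sum_distrib_right by (simp add: mult_ac)
    also have "\<dots> = (\<Sum>k=1..N. a k * E k * z k ^ r * (\<Sum>s<N. A_coef N \<alpha> w k s * x i ^ s))"
      by (subst sum.swap) (simp add: sum_distrib_left)
    also have "\<dots> = (\<Sum>k=1..N. a k * E k * z k ^ r * (\<Prod>j\<in>S k. 1 - u j * x i))"
    proof (rule sum.cong[OF refl])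
      fix k assume k: "k \<in> {1..N}"
      have "(\<Sum>s<N. A_coef N \<alpha> w k s * x i ^ s) = (\<Prod>j\<in>S k. 1 - u j * x i)"
        unfolding Aeq by (rule poly1[OF finS cardS[OF k]])
      then show "a k * E k * z k ^ r * (\<Sum>s<N. A_coef N \<alpha> w k s * x i ^ s) = a k * E k * z k ^ r * (\<Prod>j\<in>S k. 1 - u j * x i)"
        by simp
    qed
    also have "\<dots> = (\<Sum>k=1..N. if k = Suc i then a (Suc i) * E (Suc i) * z (Suc i) ^ r * P i else 0)"
    proof (rule sum.cong[OF refl])
      fix k assume k: "k \<in> {1..N}"
      show "a k * E k * z k ^ r * (\<Prod>j\<in>S k. 1 - u j * x i) = (if k = Suc i then a (Suc i) * E (Suc i) * z (Suc i) ^ r * P i else 0)"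
      proof (cases "k = Suc i")
        case True then show ?thesis by (simp add: P_def)
      next
        case False
        have "Suc i \<in> S k" using False i unfolding S_def by auto
        moreover have "1 - u (Suc i) * x i = 0" unfolding x_def using un0 by simp
        ultimately have "(\<Prod>j\<in>S k. 1 - u j * x i) = 0" using finS by (metis prod_zero)
        then show ?thesis using False by simp
      qed
    qed
    also have "\<dots> = a (Suc i) * E (Suc i) * z (Suc i) ^ r * P i"
      using i by (simp add: sum.delta')
    finally show "(B * Cm) $$ (r,i) = mat N N (\<lambda>(r,i). a (Suc i) * E (Suc i) * z (Suc i) ^ r * P i) $$ (r,i)"
      using r i by simp
  qed (auto simp: B_def B_mat_def Cm_def)
  have LBC: "Lm * (B * Cm) = mat N N (\<lambda>(i,j). if i = j then d i else 0)"
  proof (rule eq_matI)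
    fix i j assume i: "i < dim_row (mat N N (\<lambda>(i,j). if i = j then d i else 0))"
      and j: "j < dim_col (mat N N (\<lambda>(i,j). if i = j then d i else 0))"
    then have i: "i < N" and j: "j < N" by auto
    have Si: "Suc i \<in> {1..N}" using i by simp
    have "(Lm * (B * Cm)) $$ (i,j) = (\<Sum>r<N. (\<Sum>X\<in>{X\<in>Pow (S (Suc i)). card (S (Suc i) - X) = r}. \<Prod>l\<in>X. - z l) * (a (Suc j) * E (Suc j) * z (Suc j) ^ r * P j))"
      using i j unfolding BC by (simp add: Lm_def scalar_prod_def lessThan_atLeast0)
    also have "\<dots> = a (Suc j) * E (Suc j) * P j * (\<Sum>r<N. (\<Sum>X\<in>{X\<in>Pow (S (Suc i)). card (S (Suc i) - X) = r}. \<Prod>l\<in>X. - z l) * z (Suc j) ^ r)"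
      by (simp add: sum_distrib_left mult_ac)
    also have "\<dots> = a (Suc j) * E (Suc j) * P j * (\<Prod>l\<in>S (Suc i). z (Suc j) - z l)"
      by (simp only: poly2[OF finS cardS[OF Si]])
    also have "\<dots> = (if i = j then d i else 0)"
    proof (cases "i = j")
      case True then show ?thesis by (simp add: d_def Q_def mult_ac)
    next
      case False
      have "Suc j \<in> S (Suc i)" using False j unfolding S_def by auto
      then have "(\<Prod>l\<in>S (Suc i). z (Suc j) - z l) = 0" using finS by (metis prod_zero right_minus_eq)
      then show ?thesis using False by simp
    qed
    finally show "(Lm * (B * Cm)) $$ (i,j) = mat N N (\<lambda>(i,j). if i = j then d i else 0) $$ (i,j)"
      using i j by simp
  qed (auto simp: Lm_def Cm_def)
  have dnz: "d i \<noteq> 0" if i: "i < N" for i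
  proof -
    have Si: "Suc i \<in> {1..N}" using i by simp
    have "a (Suc i) \<noteq> 0" using assms(3) Si by blast
    moreover have "E (Suc i) \<noteq> 0" unfolding E_def by simp
    moreover have "P i \<noteq> 0"
    proof -
      have "1 - u j * x i \<noteq> 0" if "j \<in> S (Suc i)" for j
      proof
        assume "1 - u j * x i = 0"
        then have "u j = u (Suc i)" unfolding x_def using un0[of "Suc i"] by (simp add: field_simps)
        then show False using uinj[of j "Suc i"] that Si unfolding S_def by auto
      qed
      then show ?thesis unfolding P_def using finS by simp
    qed
    moreover have "Q i \<noteq> 0"
    proof -
      have "z (Suc i) - z j \<noteq> 0" if "j \<in> S (Suc i)" for j
        using zinj[of j "Suc i"] that Si unfolding S_def by auto
      then show ?thesis unfolding Q_def using finS by simp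
    qed
    ultimately show ?thesis unfolding d_def by simp
  qed
  have carrB: "B \<in> carrier_mat N N" by (simp add: B_def B_mat_def)
  have carrC: "Cm \<in> carrier_mat N N" by (simp add: Cm_def)
  have carrL: "Lm \<in> carrier_mat N N" by (simp add: Lm_def)
  have "det (Lm * (B * Cm)) = det Lm * (det B * det Cm)"
    using carrB carrC carrL by (simp add: det_mult[of _ N])
  moreover have "det (Lm * (B * Cm)) \<noteq> 0"
  proof -
    let ?D = "mat N N (\<lambda>(i,j). if i = j then d i else 0) :: complex mat"
    have "upper_triangular ?D" by (rule upper_triangularI) auto
    then have "det ?D = prod_list (diag_mat ?D)" by (rule det_upper_triangular) auto
    also have "\<dots> = (\<Prod>i = 0..<N. d i)" by (simp add: prod_list_diag_prod)
    also have "\<dots> \<noteq> 0" using dnz by simp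
    finally show ?thesis unfolding LBC .
  qed
  ultimately show "det (B_mat N \<alpha> a w \<theta>) \<noteq> 0" unfolding B_def by auto
qed

end
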